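(* Let $\mathcal{X}$ be a finite set, $P_X$ a probability distribution on $\mathcal{X}$, $X\sim P_X$, $\rho\ge1$, and for each $n$ let $\mathbf{X}=(X_1,\dots,X_n)$ be i.i.d. with law $P_X$. For a probability distribution $\hat P$ on $\mathcal{X}^n$, let $\hat{\mathbf{X}}_1,\hat{\mathbf{X}}_2,\dots$ be i.i.d. with law $\hat P$, independent of $\mathbf{X}$, let $G(\mathbf{X},\hat{\mathbf{X}}_1^\infty)=\inf\{k\ge1:\hat{\mathbf{X}}_k=\mathbf{X}\}$, $V_\rho(\mathbf{X},\hat{\mathbf{X}}_1^\infty)=\binom{G(\mathbf{X},\hat{\mathbf{X}}_1^\infty)+\rho-1}{\rho}$, and $\mathbb{E}\{V^*_\rho(\mathbf{X},\hat{\mathbf{X}}_1^\infty)\}=\inf_{\hat P}\mathbb{E}\{V_\rho(\mathbf{X},\hat{\mathbf{X}}_1^\infty)\}$ over all probability distributions $\hat P$ on $\mathcal{X}^n$. Then $$\lim_{n\to\infty}\frac1n\log\mathbb{E}\{V^*_\rho(\mathbf{X},\hat{\mathbf{X}}_1^\infty)\}=\rho\, H_{\frac{1}{1+\rho}}(X).$$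
   Context: $\binom{x}{y}=\frac{\Gamma(x+1)}{\Gamma(y+1)\Gamma(x-y+1)}$. Logarithms are natural. For $\alpha>0,\alpha\ne1$, $H_\alpha(X)=\frac{1}{1-\alpha}\log\sum_{x\in\mathcal{X}}P_X(x)^\alpha$. *)

theory Defs
  imports "HOL-Analysis.Analysis" "HOL-Probability.Probability"
begin

definition gbinom :: "real \<Rightarrow> real \<Rightarrow> real" where
  "gbinom x y = Gamma (x + 1) / (Gamma (y + 1) * Gamma (x - y + 1))"

text \<open>Guesswork G(x, xhat_1^infty) = inf {k >= 1. xhat_k = x} (1-based index),
  equal to infinity if x is never guessed. The stream is 0-indexed, so xhat_k = w !! (k-1).\<close>
definition guess_count :: "'b \<Rightarrow> 'b stream \<Rightarrow> enat" where
  "guess_count x w = (if \<exists>k. w !! k = x then enat (Suc (LEAST k. w !! k = x)) else \<infinity>)"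

definition V_rho :: "real \<Rightarrow> 'b \<Rightarrow> 'b stream \<Rightarrow> ennreal" where
  "V_rho \<rho> x w = (case guess_count x w of
       enat g \<Rightarrow> ennreal (gbinom (real g + \<rho> - 1) \<rho>)
     | \<infinity> \<Rightarrow> \<infinity>)"

definition expected_V :: "real \<Rightarrow> 'a pmf \<Rightarrow> nat \<Rightarrow> 'a list pmf \<Rightarrow> ennreal" where
  "expected_V \<rho> P n Phat =
     (\<integral>\<^sup>+ z. V_rho \<rho> (fst z) (snd z)
        \<partial>(measure_pmf (replicate_pmf n P) \<Otimes>\<^sub>M stream_space (measure_pmf Phat)))"

definition opt_expected_V :: "real \<Rightarrow> 'a pmf \<Rightarrow> nat \<Rightarrow> ennreal" where
  "opt_expected_V \<rho> P n =
     (INF Phat \<in> {Q :: 'a list pmf. set_pmf Q \<subseteq> {xs. length xs = n}}. expected_V \<rho> P n Phat)"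

definition renyi_entropy :: "real \<Rightarrow> 'a::finite pmf \<Rightarrow> real" where
  "renyi_entropy \<alpha> P = 1 / (1 - \<alpha>) * ln (\<Sum>x\<in>UNIV. pmf P x powr \<alpha>)"

end

theory Submission
  imports Defs
begin

definition Ek :: "nat \<Rightarrow> 'b \<Rightarrow> 'b stream set" where
  "Ek k x = {w. (\<forall>i<k. w !! i \<noteq> x) \<and> w !! k = x}"

lemma Ek_sets: "Ek k x \<in> sets (stream_space (measure_pmf Q))"
proof -
  have "Measurable.pred (stream_space (measure_pmf Q)) (\<lambda>w. (\<forall>i<k. w !! i \<noteq> x) \<and> w !! k = x)"
    by measurable
  then show ?thesis unfolding Ek_def pred_def by (simp add: space_stream_space)
qed

lemma Ek_Suc: "Ek (Suc k) x = {w. shd w \<noteq> x \<and> stl w \<in> Ek k x}"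
  unfolding Ek_def by (auto simp: less_Suc_eq_0_disj)

lemma emeasure_Ek: "emeasure (stream_space (measure_pmf Q)) (Ek k x) = ennreal ((1 - pmf Q x)^k * pmf Q x)"
proof (induction k)
  case 0
  have "emeasure (stream_space (measure_pmf Q)) (Ek 0 x) = (\<integral>\<^sup>+t. emeasure (stream_space (measure_pmf Q)) {w\<in>space (stream_space (measure_pmf Q)). t ## w \<in> Ek 0 x } \<partial>measure_pmf Q)"
    by (rule prob_space.emeasure_stream_space[OF prob_space_measure_pmf Ek_sets])
  also have "\<dots> = (\<integral>\<^sup>+t. indicator {x} t \<partial>measure_pmf Q)"
    apply (rule nn_integral_cong)
    using prob_space.emeasure_space_1[OF prob_space.prob_space_stream_space[OF prob_space_measure_pmf]]
    by (auto simp: Ek_def indicator_def space_stream_space)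
  also have "\<dots> = ennreal (pmf Q x)" by (simp add: emeasure_pmf_single)
  finally show ?case by simp
next
  case (Suc k)
  have "emeasure (stream_space (measure_pmf Q)) (Ek (Suc k) x) = (\<integral>\<^sup>+t. emeasure (stream_space (measure_pmf Q)) {w\<in>space (stream_space (measure_pmf Q)). t ## w \<in> Ek (Suc k) x } \<partial>measure_pmf Q)"
    by (rule prob_space.emeasure_stream_space[OF prob_space_measure_pmf Ek_sets])
  also have "\<dots> = (\<integral>\<^sup>+t. ennreal ((1 - pmf Q x)^k * pmf Q x) * indicator (- {x}) t \<partial>measure_pmf Q)"
    apply (rule nn_integral_cong)
    using Suc.IH
    by (auto simp: Ek_Suc indicator_def space_stream_space)
  also have "\<dots> = ennreal ((1 - pmf Q x)^k * pmf Q x) * emeasure (measure_pmf Q) (- {x})"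
    by (simp add: nn_integral_cmult_indicator)
  also have "emeasure (measure_pmf Q) (- {x}) = ennreal (1 - pmf Q x)"
    using measure_pmf.prob_compl[of "{x}" Q]
    by (simp add: measure_pmf.emeasure_eq_measure measure_pmf_single Compl_eq_Diff_UNIV)
  finally show ?case
    by (simp add: ennreal_mult'[symmetric] pmf_le_1 mult_ac)
qed

lemma gbinom_eq: "\<rho> > 0 \<Longrightarrow> gbinom (real k + \<rho>) \<rho> = (-(\<rho>+1) gchoose k) * (-1)^k"
proof -
  assume r: "\<rho> > 0"
  have np: "\<rho> + 1 \<notin> \<int>\<^sub>\<le>\<^sub>0" using r nonpos_Ints_nonpos by fastforce
  have "(-(\<rho>+1) gchoose k) * (-1)^k = pochhammer (\<rho>+1) k / fact k"
  proof -
    have "(-(\<rho>+1) gchoose k) = (-1)^k * pochhammer (\<rho>+1) k / fact k"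
      by (subst gbinomial_pochhammer) (simp add: add.commute)
    moreover have "((-1::real)^k) * (-1)^k = 1"
      by (simp flip: power_mult_distrib)
    ultimately show ?thesis by (metis (no_types) mult.commute mult.left_commute times_divide_eq_right mult_1)
  qed
  also have "\<dots> = Gamma (\<rho> + 1 + real k) / Gamma (\<rho>+1) / Gamma (real (Suc k))"
  proof -
    have "pochhammer (\<rho>+1) k = Gamma (\<rho>+1+real k)/Gamma(\<rho>+1)" using np by (rule pochhammer_Gamma)
    moreover have "fact k = Gamma (real (Suc k))" using Gamma_fact[of k, where 'a=real] by (simp add: add.commute)
    ultimately show ?thesis by simp
  qed
  also have "\<dots> = gbinom (real k + \<rho>) \<rho>"
  proof -
    have e1: "real k + \<rho> - \<rho> + 1 = real (Suc k)" by simp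
    have e2: "real k + \<rho> + 1 = \<rho> + 1 + real k" by simp
    show ?thesis unfolding gbinom_def e1 e2 by (simp only: divide_divide_eq_left)
  qed
  finally show ?thesis by (rule sym)
qed

lemma series_sums:
  assumes r: "\<rho> > 0" and p: "0 < p" "p \<le> 1"
  shows "(\<lambda>k. gbinom (real k + \<rho>) \<rho> * ((1 - p)^k * p)) sums (p powr (-\<rho>))"
proof -
  have a: "\<bar>-(1-p)\<bar> < 1" using p by auto
  have "(\<lambda>k. (-(\<rho>+1) gchoose k) * (-(1-p))^k) sums ((1 + -(1-p)) powr (-(\<rho>+1)))"
    by (rule gen_binomial_real[OF a])
  then have "(\<lambda>k. (-(\<rho>+1) gchoose k) * (-(1-p))^k * p) sums (p powr (-(\<rho>+1)) * p)"
    by (intro sums_mult2) simp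
  moreover have "p powr (-(\<rho>+1)) * p = p powr (-\<rho>)"
  proof -
    have e: "-(\<rho>+1) + 1 = -\<rho>" by simp
    have "p powr (-(\<rho>+1) + 1) = p powr (-(\<rho>+1)) * p powr 1" by (rule powr_add)
    then show ?thesis using powr_one[of p] p unfolding e by simp
  qed
  moreover have "(\<lambda>k. (-(\<rho>+1) gchoose k) * (-(1-p))^k * p) = (\<lambda>k. gbinom (real k + \<rho>) \<rho> * ((1 - p)^k * p))"
  proof
    fix k
    have "(-(1-p))^k = (-1)^k * (1-p)^k" by (rule power_minus)
    then show "(-(\<rho>+1) gchoose k) * (-(1-p))^k * p = gbinom (real k + \<rho>) \<rho> * ((1 - p)^k * p)"
      using gbinom_eq[OF r, of k] by (simp only: mult_ac)
  qed
  ultimately show ?thesis by simp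
qed

lemma gbinom_nonneg: "\<rho> > 0 \<Longrightarrow> gbinom (real k + \<rho>) \<rho> \<ge> 0"
proof -
  assume r: "\<rho> > 0"
  have "Gamma (real k + \<rho> + 1) \<ge> 0" using r by (intro Gamma_real_nonneg) linarith
  moreover have "Gamma (\<rho> + 1) \<ge> 0" using r by (intro Gamma_real_nonneg) linarith
  moreover have "Gamma (real k + \<rho> - \<rho> + 1) \<ge> 0" by (intro Gamma_real_nonneg) simp
  ultimately show ?thesis unfolding gbinom_def by (intro divide_nonneg_nonneg mult_nonneg_nonneg)
qed


definition coef :: "real \<Rightarrow> nat \<Rightarrow> ennreal" where
  "coef \<rho> k = ennreal (gbinom (real k + \<rho>) \<rho>)"

definition Einf :: "'b \<Rightarrow> 'b stream set" where
  "Einf x = {w. \<forall>k. w !! k \<noteq> x}"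

lemma Einf_sets: "Einf x \<in> sets (stream_space (measure_pmf Q))"
proof -
  have "Measurable.pred (stream_space (measure_pmf Q)) (\<lambda>w. \<forall>k. w !! k \<noteq> x)"
    by measurable
  then show ?thesis unfolding Einf_def pred_def by (simp add: space_stream_space)
qed

lemma mem_Ek: "w \<in> Ek k x \<longleftrightarrow> (\<exists>j. w !! j = x) \<and> k = (LEAST j. w !! j = x)"
proof
  assume "w \<in> Ek k x"
  then have h: "\<forall>i<k. w !! i \<noteq> x" "w !! k = x" unfolding Ek_def by auto
  have "(LEAST j. w !! j = x) = k"
  proof (rule Least_equality)
    show "w !! k = x" by (rule h(2))
    fix y assume "w !! y = x"
    then show "k \<le> y" using h(1) not_less by blast
  qed
  then show "(\<exists>j. w !! j = x) \<and> k = (LEAST j. w !! j = x)" using h(2) by auto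
next
  assume h: "(\<exists>j. w !! j = x) \<and> k = (LEAST j. w !! j = x)"
  then obtain j where j: "w !! j = x" by blast
  have "w !! (LEAST j. w !! j = x) = x" by (rule LeastI[of "\<lambda>j. w !! j = x", OF j])
  then have "w !! k = x" using h by simp
  moreover have "\<forall>i<k. w !! i \<noteq> x"
  proof (intro allI impI)
    fix i assume "i < k"
    then have "i < (LEAST j. w !! j = x)" using h by simp
    then show "w !! i \<noteq> x" by (rule not_less_Least)
  qed
  ultimately show "w \<in> Ek k x" unfolding Ek_def by simp
qed

lemma disj_Ek: "disjoint_family (\<lambda>k. Ek k x)"
  unfolding disjoint_family_on_def by (auto simp: mem_Ek)

lemma Union_Ek: "(\<Union>k. Ek k x) = - Einf x"
proof -
  have "w \<in> (\<Union>k. Ek k x) \<longleftrightarrow> w \<in> - Einf x" for w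
    by (auto simp: mem_Ek Einf_def)
  then show ?thesis by blast
qed

lemma V_decomp:
  "V_rho \<rho> x w = (\<Sum>k. coef \<rho> k * indicator (Ek k x) w) + \<infinity> * indicator (Einf x) w"
proof (cases "\<exists>j. w !! j = x")
  case True
  define m where "m = (LEAST j. w !! j = x)"
  have w1: "w \<notin> Einf x" using True unfolding Einf_def by auto
  have "(\<lambda>k. coef \<rho> k * indicator (Ek k x) w) = (\<lambda>k. if k = m then coef \<rho> m else 0)"
    using True mem_Ek[of w _ x] unfolding m_def by (auto simp: indicator_def)
  then have "(\<Sum>k. coef \<rho> k * indicator (Ek k x) w) = coef \<rho> m"
  proof -
    have "(\<lambda>k. if k = m then coef \<rho> m else 0) sums coef \<rho> m"
      using sums_single[of m "\<lambda>_. coef \<rho> m"] by simp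
    then show ?thesis unfolding \<open>(\<lambda>k. coef \<rho> k * indicator (Ek k x) w) = _\<close> by (rule sums_unique[symmetric])
  qed
  moreover have "V_rho \<rho> x w = coef \<rho> m"
  proof -
    have e: "real (Suc m) + \<rho> - 1 = real m + \<rho>" by simp
    have gc: "guess_count x w = enat (Suc m)" unfolding guess_count_def m_def using True by simp
    have "V_rho \<rho> x w = ennreal (gbinom (real (Suc m) + \<rho> - 1) \<rho>)" unfolding V_rho_def using gc by (simp only: enat.case)
    then show ?thesis unfolding e coef_def .
  qed
  ultimately show ?thesis using w1 by simp
next
  case False
  then have a: "w \<in> Einf x" unfolding Einf_def by simp
  have b: "w \<notin> Ek k x" for k using False unfolding Ek_def by simp
  have c: "guess_count x w = \<infinity>" unfolding guess_count_def using False by simp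
  have d: "(\<lambda>k. coef \<rho> k * indicator (Ek k x) w) = (\<lambda>k. 0)"
    using b by (simp add: indicator_def)
  have "V_rho \<rho> x w = \<infinity>" unfolding V_rho_def c by simp
  then show ?thesis unfolding d using a by (simp add: indicator_def)
qed

lemma inner_integral:
  assumes r: "\<rho> > 0"
  shows "(\<integral>\<^sup>+w. V_rho \<rho> x w \<partial>stream_space (measure_pmf Q)) =
     (if pmf Q x > 0 then ennreal (pmf Q x powr (-\<rho>)) else \<infinity>)"
proof -
  let ?S = "stream_space (measure_pmf Q)"
  let ?p = "pmf Q x"
  interpret S: prob_space ?S by (rule prob_space.prob_space_stream_space[OF prob_space_measure_pmf])
  have meas: "(\<lambda>w. coef \<rho> k * indicator (Ek k x) w) \<in> borel_measurable ?S" for k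
    using Ek_sets[of k x Q] by measurable
  have "(\<integral>\<^sup>+w. V_rho \<rho> x w \<partial>?S) = (\<integral>\<^sup>+w. (\<Sum>k. coef \<rho> k * indicator (Ek k x) w) + \<infinity> * indicator (Einf x) w \<partial>?S)"
    by (simp add: V_decomp)
  also have "\<dots> = (\<integral>\<^sup>+w. (\<Sum>k. coef \<rho> k * indicator (Ek k x) w) \<partial>?S) + (\<integral>\<^sup>+w. \<infinity> * indicator (Einf x) w \<partial>?S)"
  proof -
    have m2: "(\<lambda>w. (\<infinity>::ennreal) * indicator (Einf x) w) \<in> borel_measurable ?S"
      by (rule borel_measurable_times_ennreal[OF borel_measurable_const borel_measurable_indicator[OF Einf_sets]])
    show ?thesis by (rule nn_integral_add[OF borel_measurable_suminf_order[OF meas] m2])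
  qed
  also have "(\<integral>\<^sup>+w. (\<Sum>k. coef \<rho> k * indicator (Ek k x) w) \<partial>?S) = (\<Sum>k. \<integral>\<^sup>+w. coef \<rho> k * indicator (Ek k x) w \<partial>?S)"
    by (rule nn_integral_suminf[OF meas])
  also have "\<dots> = (\<Sum>k. coef \<rho> k * ennreal ((1 - ?p)^k * ?p))"
    using Ek_sets[of _ x Q] by (simp add: nn_integral_cmult_indicator emeasure_Ek)
  also have "(\<integral>\<^sup>+w. \<infinity> * indicator (Einf x) w \<partial>?S) = \<infinity> * emeasure ?S (Einf x)"
    using Einf_sets[of x Q] by (simp add: nn_integral_cmult_indicator)
  finally have I: "(\<integral>\<^sup>+w. V_rho \<rho> x w \<partial>?S) = (\<Sum>k. coef \<rho> k * ennreal ((1 - ?p)^k * ?p)) + \<infinity> * emeasure ?S (Einf x)" .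
  have U: "emeasure ?S (- Einf x) = (\<Sum>k. ennreal ((1 - ?p)^k * ?p))"
  proof -
    have "(\<Sum>k. emeasure ?S (Ek k x)) = emeasure ?S (\<Union>k. Ek k x)"
      by (rule suminf_emeasure) (use Ek_sets[of _ x Q] disj_Ek[of x] in auto)
    then have "(\<Sum>k. ennreal ((1 - ?p)^k * ?p)) = emeasure ?S (- Einf x)"
      unfolding Union_Ek emeasure_Ek .
    then show ?thesis by (rule sym)
  qed
  have T: "emeasure ?S (Einf x) + emeasure ?S (- Einf x) = 1"
  proof -
    have "emeasure ?S (Einf x) + emeasure ?S (- Einf x) = emeasure ?S (Einf x \<union> - Einf x)"
    proof (intro plus_emeasure)
      show "Einf x \<in> sets ?S" by (rule Einf_sets)
      have "space ?S - Einf x \<in> sets ?S" by (rule sets.compl_sets[OF Einf_sets])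
      then show "- Einf x \<in> sets ?S" by (simp add: space_stream_space Compl_eq_Diff_UNIV)
    qed auto
    also have "\<dots> = emeasure ?S (space ?S)" by (simp add: space_stream_space)
    finally show ?thesis by (simp add: S.emeasure_space_1)
  qed
  show ?thesis
  proof (cases "?p > 0")
    case True
    have g: "(\<lambda>k. (1 - ?p)^k * ?p) sums 1"
    proof -
      have "(\<lambda>k. (1 - ?p)^k) sums (1 / (1 - (1 - ?p)))"
        using True pmf_le_1[of Q x] by (intro geometric_sums) auto
      then have "(\<lambda>k. (1 - ?p)^k * ?p) sums (1 / (1 - (1 - ?p)) * ?p)" by (rule sums_mult2)
      then show ?thesis using True by simp
    qed
    have "(\<Sum>k. ennreal ((1 - ?p)^k * ?p)) = ennreal 1"
    proof -
      have nn: "0 \<le> (1 - ?p)^k * ?p" for k using pmf_le_1[of Q x] by simp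
      have "(\<lambda>k. ennreal ((1 - ?p)^k * ?p)) sums ennreal 1"
        by (rule iffD2[OF sums_ennreal[OF nn zero_le_one] g])
      then show ?thesis by (rule sums_unique[symmetric])
    qed
    then have "emeasure ?S (Einf x) = 0" using T U by simp
    moreover have "(\<Sum>k. coef \<rho> k * ennreal ((1 - ?p)^k * ?p)) = ennreal (?p powr (-\<rho>))"
    proof -
      have nn: "0 \<le> gbinom (real k + \<rho>) \<rho> * ((1 - ?p)^k * ?p)" for k
        using gbinom_nonneg[OF r, of k] pmf_le_1[of Q x] by simp
      have nn2: "0 \<le> ?p powr (-\<rho>)" by simp
      have s1: "(\<lambda>k. ennreal (gbinom (real k + \<rho>) \<rho> * ((1 - ?p)^k * ?p))) sums ennreal (?p powr (-\<rho>))"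
        by (rule iffD2[OF sums_ennreal[OF nn nn2] series_sums[OF r True pmf_le_1]])
      have e: "(\<lambda>k. ennreal (gbinom (real k + \<rho>) \<rho> * ((1 - ?p)^k * ?p))) = (\<lambda>k. coef \<rho> k * ennreal ((1 - ?p)^k * ?p))"
      proof
        fix k
        show "ennreal (gbinom (real k + \<rho>) \<rho> * ((1 - ?p)^k * ?p)) = coef \<rho> k * ennreal ((1 - ?p)^k * ?p)"
          unfolding coef_def using gbinom_nonneg[OF r, of k] pmf_le_1[of Q x] by (intro ennreal_mult) simp_all
      qed
      show ?thesis using s1 unfolding e by (rule sums_unique[symmetric])
    qed
    ultimately show ?thesis using I True by simp
  next
    case False
    then have p0: "?p = 0" using pmf_nonneg[of Q x] by linarith
    have "emeasure ?S (Einf x) = 1" using T U p0 by simp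
    then show ?thesis using I p0 by simp
  qed
qed


lemma tangent:
  fixes t \<rho> :: real
  assumes t: "t > 0" and r: "\<rho> > 0"
  shows "t powr (-\<rho>) \<ge> 1 - \<rho> * (t - 1)"
proof -
  have "t powr (-\<rho>) = exp (-\<rho> * ln t)" using t by (simp add: powr_def)
  also have "\<dots> \<ge> 1 + (-\<rho> * ln t)" by (rule exp_ge_add_one_self)
  finally have "t powr (-\<rho>) \<ge> 1 - \<rho> * ln t" by simp
  moreover have "\<rho> * ln t \<le> \<rho> * (t - 1)" using ln_le_minus_one[OF t] r by (intro mult_left_mono) auto
  ultimately show ?thesis by linarith
qed

lemma pointwise:
  fixes m q Z \<rho> :: real
  assumes m: "m > 0" and q: "q > 0" and Z: "Z > 0" and r: "\<rho> > 0"
  shows "m powr (1+\<rho>) * q powr (-\<rho>) \<ge> Z powr \<rho> * ((1+\<rho>)*m - \<rho>*Z*q)"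
proof -
  define t where "t = q * Z / m"
  have t: "t > 0" using m q Z unfolding t_def by simp
  have "t powr (-\<rho>) = q powr (-\<rho>) * Z powr (-\<rho>) * m powr \<rho>"
    unfolding t_def using m q Z
    by (simp add: powr_divide powr_mult powr_minus divide_inverse inverse_powr)
  have A: "m * Z powr \<rho> * t powr (-\<rho>) = m powr (1+\<rho>) * q powr (-\<rho>)"
  proof -
    have "m * Z powr \<rho> * t powr (-\<rho>) = (m powr 1 * m powr \<rho>) * q powr (-\<rho>) * (Z powr \<rho> * Z powr (-\<rho>))"
      using \<open>t powr (-\<rho>) = _\<close> m by (simp add: mult_ac)
    also have "Z powr \<rho> * Z powr (-\<rho>) = 1" using Z by (simp add: powr_minus)
    also have "m powr 1 * m powr \<rho> = m powr (1+\<rho>)" by (simp only: powr_add)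
    finally show ?thesis by simp
  qed
  have B: "m * Z powr \<rho> * (1 - \<rho> * (t - 1)) = Z powr \<rho> * ((1+\<rho>)*m - \<rho>*Z*q)"
    unfolding t_def using m by (simp add: field_simps)
  have "m * Z powr \<rho> * (1 - \<rho> * (t - 1)) \<le> m * Z powr \<rho> * t powr (-\<rho>)"
    using tangent[OF t r] m by (intro mult_left_mono) auto
  then show ?thesis using A B by simp
qed

lemma real_lower:
  fixes M q :: "'b \<Rightarrow> real" and \<rho> :: real
  assumes fin: "finite F" and ne: "F \<noteq> {}" and Mp: "\<And>x. x \<in> F \<Longrightarrow> M x > 0"
    and qp: "\<And>x. x \<in> F \<Longrightarrow> q x > 0" and qs: "(\<Sum>x\<in>F. q x) \<le> 1" and r: "\<rho> > 0"
  shows "(\<Sum>x\<in>F. M x * q x powr (-\<rho>)) \<ge> (\<Sum>x\<in>F. M x powr (1/(1+\<rho>))) powr (1+\<rho>)"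
proof -
  define m where "m x = M x powr (1/(1+\<rho>))" for x
  define Z where "Z = (\<Sum>x\<in>F. m x)"
  have mp: "m x > 0" if "x \<in> F" for x using Mp[OF that] unfolding m_def by simp
  have Zp: "Z > 0" unfolding Z_def using mp fin ne by (intro sum_pos) auto
  have Mm: "M x = m x powr (1+\<rho>)" if "x \<in> F" for x
  proof -
    have "m x powr (1+\<rho>) = M x powr (1/(1+\<rho>) * (1+\<rho>))" unfolding m_def by (simp add: powr_powr)
    also have "1/(1+\<rho>) * (1+\<rho>) = 1" using r by simp
    finally show ?thesis using Mp[OF that] by simp
  qed
  have "(\<Sum>x\<in>F. M x * q x powr (-\<rho>)) = (\<Sum>x\<in>F. m x powr (1+\<rho>) * q x powr (-\<rho>))"
    using Mm by (intro sum.cong) auto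
  also have "\<dots> \<ge> (\<Sum>x\<in>F. Z powr \<rho> * ((1+\<rho>)*m x - \<rho>*Z*q x))"
    using pointwise[OF mp qp Zp r] by (intro sum_mono) auto
  finally have 1: "(\<Sum>x\<in>F. M x * q x powr (-\<rho>)) \<ge> (\<Sum>x\<in>F. Z powr \<rho> * ((1+\<rho>)*m x - \<rho>*Z*q x))" .
  have "(\<Sum>x\<in>F. Z powr \<rho> * ((1+\<rho>)*m x - \<rho>*Z*q x)) = Z powr \<rho> * ((1+\<rho>) * Z - \<rho>*Z*(\<Sum>x\<in>F. q x))"
  proof -
    have "(\<Sum>x\<in>F. Z powr \<rho> * ((1+\<rho>)*m x - \<rho>*Z*q x)) = Z powr \<rho> * (\<Sum>x\<in>F. (1+\<rho>)*m x - \<rho>*Z*q x)"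
      by (rule sum_distrib_left[symmetric])
    also have "(\<Sum>x\<in>F. (1+\<rho>)*m x - \<rho>*Z*q x) = (1+\<rho>) * (\<Sum>x\<in>F. m x) - \<rho>*Z*(\<Sum>x\<in>F. q x)"
      by (simp add: sum_subtractf sum_distrib_left)
    finally show ?thesis unfolding Z_def by simp
  qed
  also have "\<dots> \<ge> Z powr \<rho> * ((1+\<rho>) * Z - \<rho>*Z*1)"
    using qs Zp r by (intro mult_left_mono) auto
  also have "Z powr \<rho> * ((1+\<rho>) * Z - \<rho>*Z*1) = Z powr \<rho> * Z powr 1" using Zp by (simp add: algebra_simps)
  also have "\<dots> = Z powr (1+\<rho>)" by (simp only: powr_add[symmetric] add.commute)
  finally show ?thesis using 1 unfolding Z_def m_def by linarith
qed


lemma V_meas: "(\<lambda>w. V_rho \<rho> x w) \<in> borel_measurable (stream_space (measure_pmf Q))"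
proof -
  have meas: "(\<lambda>w. coef \<rho> k * indicator (Ek k x) w) \<in> borel_measurable (stream_space (measure_pmf Q))" for k
    using Ek_sets[of k x Q] by measurable
  have m2: "(\<lambda>w. (\<infinity>::ennreal) * indicator (Einf x) w) \<in> borel_measurable (stream_space (measure_pmf Q))"
    by (rule borel_measurable_times_ennreal[OF borel_measurable_const borel_measurable_indicator[OF Einf_sets]])
  have "(\<lambda>w. (\<Sum>k. coef \<rho> k * indicator (Ek k x) w) + \<infinity> * indicator (Einf x) w) \<in> borel_measurable (stream_space (measure_pmf Q))"
    by (rule borel_measurable_add[OF borel_measurable_suminf_order[OF meas] m2])
  then show ?thesis by (simp only: V_decomp)
qed

lemma expected_formula:
  fixes M :: "'b::countable pmf"
  assumes r: "\<rho> > 0" and fin: "finite (set_pmf M)"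
  shows "(\<integral>\<^sup>+z. V_rho \<rho> (fst z) (snd z) \<partial>(measure_pmf M \<Otimes>\<^sub>M stream_space (measure_pmf Q))) =
    (\<Sum>x\<in>set_pmf M. (if pmf Q x > 0 then ennreal (pmf Q x powr (-\<rho>)) else \<infinity>) * pmf M x)"
proof -
  let ?S = "stream_space (measure_pmf Q)"
  interpret S: prob_space ?S by (rule prob_space.prob_space_stream_space[OF prob_space_measure_pmf])
  have m0: "(\<lambda>z. V_rho \<rho> (fst z) (snd z)) \<in> borel_measurable (count_space UNIV \<Otimes>\<^sub>M ?S)"
  proof (rule measurable_pair_measure_countable1)
    show "countable (UNIV :: 'b set)" by (rule countableI_type)
    fix x :: 'b
    show "(\<lambda>y. V_rho \<rho> (fst (x, y)) (snd (x, y))) \<in> borel_measurable ?S"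
      unfolding fst_conv snd_conv by (rule V_meas)
  qed
  have seq: "sets (measure_pmf M \<Otimes>\<^sub>M ?S) = sets (count_space UNIV \<Otimes>\<^sub>M ?S)"
    by (rule sets_pair_measure_cong[OF sets_measure_pmf_count_space refl])
  have mf: "(\<lambda>z. V_rho \<rho> (fst z) (snd z)) \<in> borel_measurable (measure_pmf M \<Otimes>\<^sub>M ?S)"
    using m0 unfolding measurable_cong_sets[OF seq refl] .
  have "(\<integral>\<^sup>+z. V_rho \<rho> (fst z) (snd z) \<partial>(measure_pmf M \<Otimes>\<^sub>M ?S)) = (\<integral>\<^sup>+x. \<integral>\<^sup>+w. V_rho \<rho> x w \<partial>?S \<partial>measure_pmf M)"
    using S.nn_integral_fst[OF mf] unfolding fst_conv snd_conv by (rule sym)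
  also have "\<dots> = (\<integral>\<^sup>+x. (if pmf Q x > 0 then ennreal (pmf Q x powr (-\<rho>)) else \<infinity>) \<partial>measure_pmf M)"
    by (rule nn_integral_cong) (rule inner_integral[OF r])
  also have "\<dots> = (\<Sum>x\<in>set_pmf M. (if pmf Q x > 0 then ennreal (pmf Q x powr (-\<rho>)) else \<infinity>) * pmf M x)"
    by (rule nn_integral_measure_pmf_finite[OF fin]) simp
  finally show ?thesis .
qed

lemma powr_inv_pow:
  fixes y \<rho> :: real
  assumes "y > 0" "\<rho> > 0"
  shows "(y powr (1/(1+\<rho>))) powr (1+\<rho>) = y"
proof -
  have "(y powr (1/(1+\<rho>))) powr (1+\<rho>) = y powr (1/(1+\<rho>) * (1+\<rho>))" by (simp add: powr_powr)
  also have "1/(1+\<rho>) * (1+\<rho>) = 1" using assms by simp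
  finally show ?thesis using assms by simp
qed

lemma opt_term:
  fixes m Z \<rho> :: real
  assumes m: "m > 0" and Z: "Z > 0"
  shows "(m / Z) powr (-\<rho>) * m powr (1+\<rho>) = Z powr \<rho> * m"
proof -
  have 1: "(m/Z) powr (-\<rho>) = m powr (-\<rho>) * Z powr \<rho>"
  proof -
    have "(m/Z) powr (-\<rho>) = m powr (-\<rho>) / Z powr (-\<rho>)" using m Z by (intro powr_divide; auto)
    also have "Z powr (-\<rho>) = inverse (Z powr \<rho>)" by (rule powr_minus)
    finally show ?thesis by (simp add: divide_inverse)
  qed
  have 2: "m powr (-\<rho> + (1+\<rho>)) = m powr (-\<rho>) * m powr (1+\<rho>)" by (rule powr_add)
  have 3: "-\<rho> + (1+\<rho>) = 1" by simp
  have "m powr (-\<rho>) * m powr (1+\<rho>) = m" using 2 m unfolding 3 by simp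
  then show ?thesis unfolding 1 by (metis mult.commute mult.left_commute)
qed

lemma opt_general:
  fixes M :: "'b::countable pmf" and A :: "'b set"
  assumes r: "\<rho> > 0" and fin: "finite (set_pmf M)" and sub: "set_pmf M \<subseteq> A"
  shows "(INF Q \<in> {Q. set_pmf Q \<subseteq> A}. \<integral>\<^sup>+z. V_rho \<rho> (fst z) (snd z) \<partial>(measure_pmf M \<Otimes>\<^sub>M stream_space (measure_pmf Q)))
     = ennreal ((\<Sum>x\<in>set_pmf M. pmf M x powr (1/(1+\<rho>))) powr (1+\<rho>))"
    (is "(INF Q \<in> _. ?val Q) = ennreal (?Z powr (1+\<rho>))")
proof -
  let ?F = "set_pmf M"
  define Z where "Z = ?Z"
  have Mp: "\<And>x. x \<in> ?F \<Longrightarrow> pmf M x > 0" by (simp add: pmf_positive)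
  have ne: "?F \<noteq> {}" by (rule set_pmf_not_empty)
  have Zp: "Z > 0" unfolding Z_def
  proof (intro sum_pos[OF fin ne])
    fix x assume "x \<in> ?F"
    then show "0 < pmf M x powr (1/(1+\<rho>))" using Mp[of x] by simp
  qed
  have ge: "?val Q \<ge> ennreal (Z powr (1+\<rho>))" for Q
  proof (cases "\<forall>x\<in>?F. pmf Q x > 0")
    case True
    have "?val Q = (\<Sum>x\<in>?F. (if pmf Q x > 0 then ennreal (pmf Q x powr (-\<rho>)) else \<infinity>) * pmf M x)"
      by (rule expected_formula[OF r fin])
    also have "\<dots> = (\<Sum>x\<in>?F. ennreal (pmf M x * pmf Q x powr (-\<rho>)))"
      using True by (intro sum.cong refl) (simp add: ennreal_mult'' mult.commute)
    also have "\<dots> = ennreal (\<Sum>x\<in>?F. pmf M x * pmf Q x powr (-\<rho>))"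
      by (rule sum_ennreal) simp
    finally have v: "?val Q = ennreal (\<Sum>x\<in>?F. pmf M x * pmf Q x powr (-\<rho>))" .
    have qs: "(\<Sum>x\<in>?F. pmf Q x) \<le> 1"
      using measure_measure_pmf_finite[OF fin, of Q] measure_pmf.prob_le_1[of Q ?F] by simp
    have "(\<Sum>x\<in>?F. pmf M x * pmf Q x powr (-\<rho>)) \<ge> Z powr (1+\<rho>)"
      unfolding Z_def using real_lower[where M="pmf M" and q="pmf Q", OF fin ne Mp _ qs r] True by blast
    then show ?thesis unfolding v by (rule ennreal_leI)
  next
    case False
    then obtain x where x: "x \<in> ?F" "\<not> pmf Q x > 0" by blast
    have "?val Q = (\<Sum>x\<in>?F. (if pmf Q x > 0 then ennreal (pmf Q x powr (-\<rho>)) else \<infinity>) * pmf M x)"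
      by (rule expected_formula[OF r fin])
    also have "\<dots> \<ge> (if pmf Q x > 0 then ennreal (pmf Q x powr (-\<rho>)) else \<infinity>) * pmf M x"
      by (rule member_le_sum[OF x(1) _ fin]) simp
    also have "(if pmf Q x > 0 then ennreal (pmf Q x powr (-\<rho>)) else \<infinity>) * pmf M x = \<infinity>"
      using x Mp[OF x(1)] by (simp add: ennreal_mult_top)
    finally have "?val Q = \<top>" by (simp only: infinity_ennreal_def top_unique)
    then show ?thesis by simp
  qed
  define f where "f x = pmf M x powr (1/(1+\<rho>)) / Z" for x
  have fnn: "\<And>x. 0 \<le> f x" unfolding f_def using Zp by simp
  have f0: "f x = 0" if "x \<notin> ?F" for x using that unfolding f_def by (simp add: set_pmf_iff)
  have fpos: "f x > 0" if "x \<in> ?F" for x using Mp[OF that] Zp unfolding f_def by simp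
  have fsum: "(\<integral>\<^sup>+x. ennreal (f x) \<partial>count_space UNIV) = 1"
  proof -
    have "(\<integral>\<^sup>+x. ennreal (f x) \<partial>count_space UNIV) = (\<Sum>x\<in>?F. ennreal (f x))"
      using f0 fin by (intro nn_integral_count_space') auto
    also have "\<dots> = ennreal (\<Sum>x\<in>?F. f x)" by (rule sum_ennreal) (rule fnn)
    also have "(\<Sum>x\<in>?F. f x) = 1" unfolding f_def Z_def using Zp[unfolded Z_def]
      by (simp add: sum_divide_distrib[symmetric])
    finally show ?thesis by simp
  qed
  define Q where "Q = embed_pmf f"
  have pQ: "pmf Q x = f x" for x unfolding Q_def by (rule pmf_embed_pmf[OF fnn fsum])
  have sQ: "set_pmf Q = ?F"
    unfolding Q_def set_embed_pmf[OF fnn fsum] using f0 fpos by force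
  have le: "?val Q \<le> ennreal (Z powr (1+\<rho>))"
  proof -
    have "?val Q = (\<Sum>x\<in>?F. (if pmf Q x > 0 then ennreal (pmf Q x powr (-\<rho>)) else \<infinity>) * pmf M x)"
      by (rule expected_formula[OF r fin])
    also have "\<dots> = (\<Sum>x\<in>?F. ennreal (Z powr \<rho> * pmf M x powr (1/(1+\<rho>))))"
    proof (intro sum.cong refl)
      fix x assume x: "x \<in> ?F"
      have mpos: "pmf M x powr (1/(1+\<rho>)) > 0" using Mp[OF x] by simp
      have "f x powr (-\<rho>) * pmf M x = Z powr \<rho> * pmf M x powr (1/(1+\<rho>))"
        using opt_term[OF mpos Zp, of \<rho>] powr_inv_pow[OF Mp[OF x] r] unfolding f_def by simp
      then show "(if pmf Q x > 0 then ennreal (pmf Q x powr (-\<rho>)) else \<infinity>) * pmf M x = ennreal (Z powr \<rho> * pmf M x powr (1/(1+\<rho>)))"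
        using fpos[OF x] pQ[of x] by (simp add: ennreal_mult''[symmetric])
    qed
    also have "\<dots> = ennreal (\<Sum>x\<in>?F. Z powr \<rho> * pmf M x powr (1/(1+\<rho>)))"
      by (rule sum_ennreal) simp
    also have "(\<Sum>x\<in>?F. Z powr \<rho> * pmf M x powr (1/(1+\<rho>))) = Z powr \<rho> * Z"
      unfolding Z_def by (simp add: sum_distrib_left)
    also have "Z powr \<rho> * Z = Z powr (1+\<rho>)" using Zp by (simp add: powr_add)
    finally show ?thesis by simp
  qed
  have "(INF Q \<in> {Q. set_pmf Q \<subseteq> A}. ?val Q) = ennreal (Z powr (1+\<rho>))"
  proof (rule antisym)
    show "(INF Q \<in> {Q. set_pmf Q \<subseteq> A}. ?val Q) \<le> ennreal (Z powr (1+\<rho>))"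
      using sQ sub le by (intro INF_lower2[of Q]) auto
    show "ennreal (Z powr (1+\<rho>)) \<le> (INF Q \<in> {Q. set_pmf Q \<subseteq> A}. ?val Q)"
      using ge by (intro INF_greatest) auto
  qed
  then show ?thesis unfolding Z_def .
qed



lemma finite_len: "finite {xs :: 'a::finite list. length xs = n}"
proof -
  have "finite (UNIV :: 'a set)" by simp
  from finite_lists_length_eq[OF this, of n] show ?thesis by simp
qed

lemma pmf_replicate:
  fixes P :: "'a::finite pmf"
  shows "pmf (replicate_pmf n P) xs = (if length xs = n then prod_list (map (pmf P) xs) else 0)"
proof (induction n arbitrary: xs)
  case 0
  then show ?case by (simp add: pmf_return indicator_def)
next
  case (Suc n)
  have eq: "replicate_pmf (Suc n) P = bind_pmf P (\<lambda>x. map_pmf ((#) x) (replicate_pmf n P))"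
    by (simp add: map_pmf_def)
  show ?case
  proof (cases xs)
    case Nil
    have "Nil \<notin> set_pmf (replicate_pmf (Suc n) P)" by (simp add: set_replicate_pmf)
    then have "pmf (replicate_pmf (Suc n) P) [] = 0" by (metis set_pmf_iff)
    then show ?thesis using Nil by (simp del: replicate_pmf.simps)
  next
    case (Cons y ys)
    have "pmf (replicate_pmf (Suc n) P) (y # ys) = (\<integral>x. pmf (map_pmf ((#) x) (replicate_pmf n P)) (y # ys) \<partial>measure_pmf P)"
      unfolding eq by (rule pmf_bind)
    also have "\<dots> = (\<integral>x. (if x = y then pmf (replicate_pmf n P) ys else 0) \<partial>measure_pmf P)"
    proof (rule Bochner_Integration.integral_cong[OF refl])
      fix x
      show "pmf (map_pmf ((#) x) (replicate_pmf n P)) (y # ys) = (if x = y then pmf (replicate_pmf n P) ys else 0)"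
      proof (cases "x = y")
        case True
        then show ?thesis using pmf_map_inj'[of "(#) x" "replicate_pmf n P" ys] by simp
      next
        case False
        then have "y # ys \<notin> set_pmf (map_pmf ((#) x) (replicate_pmf n P))" by auto
        then have "pmf (map_pmf ((#) x) (replicate_pmf n P)) (y # ys) = 0" by (metis set_pmf_iff)
        then show ?thesis using False by simp
      qed
    qed
    also have "\<dots> = pmf P y * pmf (replicate_pmf n P) ys"
    proof -
      have "(\<integral>x. (if x = y then pmf (replicate_pmf n P) ys else 0) \<partial>measure_pmf P) = (\<Sum>a\<in>UNIV. pmf P a *\<^sub>R (if a = y then pmf (replicate_pmf n P) ys else 0))"
        by (rule integral_measure_pmf) auto
      also have "\<dots> = pmf P y * pmf (replicate_pmf n P) ys"
        by (simp add: if_distrib[of "\<lambda>t. pmf P _ * t"] cong: if_cong)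
      finally show ?thesis .
    qed
    finally show ?thesis using Cons Suc.IH[of ys] by simp
  qed
qed

lemma sum_lists_prod:
  fixes g :: "'a::finite \<Rightarrow> real"
  shows "(\<Sum>xs\<in>{xs. length xs = n}. prod_list (map g xs)) = (\<Sum>x\<in>UNIV. g x) ^ n"
proof (induction n)
  case 0
  have "{xs :: 'a list. length xs = 0} = {[]}" by auto
  then show ?case by simp
next
  case (Suc n)
  have e: "{xs :: 'a list. length xs = Suc n} = (\<lambda>(x, ys). x # ys) ` (UNIV \<times> {ys. length ys = n})"
    by (auto simp: length_Suc_conv image_iff)
  have inj: "inj_on (\<lambda>(x, ys). x # ys) (UNIV \<times> {ys :: 'a list. length ys = n})"
    by (auto simp: inj_on_def)
  have "(\<Sum>xs\<in>{xs. length xs = Suc n}. prod_list (map g xs)) = (\<Sum>p\<in>UNIV \<times> {ys. length ys = n}. prod_list (map g ((\<lambda>(x, ys). x # ys) p)))"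
    unfolding e by (rule sum.reindex[OF inj, unfolded comp_def])
  also have "\<dots> = (\<Sum>(x,ys)\<in>UNIV \<times> {ys. length ys = n}. prod_list (map g (x # ys)))"
    by (rule sum.cong) auto
  also have "\<dots> = (\<Sum>x\<in>UNIV. \<Sum>ys\<in>{ys. length ys = n}. prod_list (map g (x # ys)))"
    by (rule sum.cartesian_product[symmetric])
  also have "\<dots> = (\<Sum>x\<in>UNIV. \<Sum>ys\<in>{ys. length ys = n}. g x * prod_list (map g ys))"
    by simp
  also have "\<dots> = (\<Sum>x\<in>UNIV. g x * (\<Sum>ys\<in>{ys. length ys = n}. prod_list (map g ys)))"
    by (simp add: sum_distrib_left)
  also have "\<dots> = (\<Sum>x\<in>UNIV. g x) ^ Suc n"
    unfolding Suc.IH by (simp add: sum_distrib_right mult.commute)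
  finally show ?case .
qed

lemma prod_list_powr:
  fixes xs :: "real list"
  assumes "\<And>x. x \<in> set xs \<Longrightarrow> x \<ge> 0"
  shows "prod_list xs powr a = prod_list (map (\<lambda>x. x powr a) xs)"
  using assms
proof (induction xs)
  case Nil then show ?case by simp
next
  case (Cons x xs)
  have "prod_list xs \<ge> 0" using Cons.prems by (intro prod_list_nonneg) auto
  then show ?case using Cons by (simp add: powr_mult)
qed

lemma Z_rep:
  fixes P :: "'a::finite pmf"
  assumes "a > 0"
  shows "(\<Sum>xs\<in>set_pmf (replicate_pmf n P). pmf (replicate_pmf n P) xs powr a) = (\<Sum>x\<in>UNIV. pmf P x powr a) ^ n"
proof -
  have "(\<Sum>xs\<in>set_pmf (replicate_pmf n P). pmf (replicate_pmf n P) xs powr a) = (\<Sum>xs\<in>{xs. length xs = n}. pmf (replicate_pmf n P) xs powr a)"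
  proof (rule sum.mono_neutral_left[OF finite_len])
    show "set_pmf (replicate_pmf n P) \<subseteq> {xs. length xs = n}" by (auto simp: set_replicate_pmf)
    show "\<forall>i\<in>{xs. length xs = n} - set_pmf (replicate_pmf n P). pmf (replicate_pmf n P) i powr a = 0"
      by (auto simp: set_pmf_iff)
  qed
  also have "\<dots> = (\<Sum>xs\<in>{xs. length xs = n}. prod_list (map (\<lambda>x. pmf P x powr a) xs))"
  proof (rule sum.cong[OF refl])
    fix xs :: "'a list" assume "xs \<in> {xs. length xs = n}"
    moreover have "prod_list (map (pmf P) xs) powr a = prod_list (map (\<lambda>x. x powr a) (map (pmf P) xs))"
      by (rule prod_list_powr) auto
    ultimately show "pmf (replicate_pmf n P) xs powr a = prod_list (map (\<lambda>x. pmf P x powr a) xs)"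
      by (simp add: pmf_replicate o_def)
  qed
  also have "\<dots> = (\<Sum>x\<in>UNIV. pmf P x powr a) ^ n" by (rule sum_lists_prod)
  finally show ?thesis .
qed

theorem corollary1:
  fixes P :: "'a::finite pmf" and \<rho> :: real
  assumes "\<rho> \<ge> 1"
  shows "(\<lambda>n. ln (enn2real (opt_expected_V \<rho> P n)) / real n)
           \<longlonglongrightarrow> \<rho> * renyi_entropy (1 / (1 + \<rho>)) P"
proof -
  have r: "\<rho> > 0" using assms by simp
  define S where "S = (\<Sum>x\<in>UNIV. pmf P x powr (1/(1+\<rho>)))"
  have Sp: "S > 0"
  proof -
    obtain y where y: "y \<in> set_pmf P" using set_pmf_not_empty[of P] by blast
    have "0 < pmf P y powr (1/(1+\<rho>))" using y by (simp add: set_pmf_iff)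
    also have "\<dots> \<le> S" unfolding S_def by (rule member_le_sum) auto
    finally show ?thesis .
  qed
  have opt: "opt_expected_V \<rho> P n = ennreal ((S ^ n) powr (1+\<rho>))" for n
  proof -
    have fin: "finite (set_pmf (replicate_pmf n P))"
      by (rule finite_subset[OF _ finite_len[of n]]) (auto simp: set_replicate_pmf)
    have sub: "set_pmf (replicate_pmf n P) \<subseteq> {xs. length xs = n}" by (auto simp: set_replicate_pmf)
    have ap: "1/(1+\<rho>) > 0" using r by simp
    have Zr: "(\<Sum>xs\<in>set_pmf (replicate_pmf n P). pmf (replicate_pmf n P) xs powr (1/(1+\<rho>))) = S ^ n"
      unfolding S_def by (rule Z_rep[OF ap])
    show ?thesis
      unfolding opt_expected_V_def expected_V_def opt_general[OF r fin sub] Zr ..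
  qed
  have ev: "ln (enn2real (opt_expected_V \<rho> P n)) / real n = (1+\<rho>) * ln S" if n: "n \<ge> 1" for n
  proof -
    have "enn2real (opt_expected_V \<rho> P n) = (S ^ n) powr (1+\<rho>)" unfolding opt using Sp by simp
    then have "ln (enn2real (opt_expected_V \<rho> P n)) = (1+\<rho>) * (real n * ln S)"
      using Sp by (simp add: ln_powr ln_realpow)
    then show ?thesis using n by simp
  qed
  have rhs: "\<rho> * renyi_entropy (1 / (1 + \<rho>)) P = (1+\<rho>) * ln S"
  proof -
    have "1 - 1/(1+\<rho>) = \<rho>/(1+\<rho>)" using r by (simp add: field_simps)
    then have "\<rho> * (1 / (1 - 1/(1+\<rho>))) = 1+\<rho>" using r by simp
    then show ?thesis unfolding renyi_entropy_def S_def by (metis mult.assoc)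
  qed
  show ?thesis unfolding rhs
    by (rule tendsto_eventually) (use ev in \<open>auto simp: eventually_sequentially\<close>)
qed

end
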